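(* Let $P$ be a polynomial with integer coefficients and let $L$ be the differential operator $L=2\pi i\, P\!\left(\frac{1}{2\pi i}\frac{\partial}{\partial x}\right)$. Consider the initial value problem $L U(t,x)=U_t(t,x)$ with $U(0,x)=f(x)$, where $f$ is in class $\mathcal{D}$ (i.e. $f$ is integrable, periodic of period $1$, piecewise continuously differentiable, and $f(x)=\tfrac12\{f(x^+)+f(x^-)\}$ for all $x$), and where $U(t,x)$ is the solution given by the Fourier series $\sum_k c_k\, e(tP(k)+kx)$, $c_k$ being the Fourier coefficients of $f$ (with partial sums taken symmetrically, $\lim_{K\to\infty}\sum_{|k|\le K}$). Denote $$G(u,v;q)=\sum_{w \,(\mathrm{mod}\ q)} e_q\big(uP(w)-vw\big).$$ Then at the rational time $t=u/q$ (a reduced fraction) this series converges and $$U(t,x)=\frac{1}{q}\sum_{v\,(\mathrm{mod}\ q)} G(u,v;q)\, f\!\left(x+\frac{v}{q}\right).$$ Consequently, if $U(0,x)$ is piecewise constant, then $U(t,x)$ is piecewise constant in $x$ at all rational times $t$.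
   Context: Notation: $e(\xi)=e^{2\pi i\xi}$ and $e_q(\xi)=e(\xi/q)=e^{2\pi i\xi/q}$. Functions of class $\mathcal{D}$ have Fourier series converging pointwise to $f$ in the sense $f(x)=\lim_{K\to\infty}\sum_{|k|\le K}c_k e(kx)$. The Fourier modes $e(tP(k)+kx)$ solve $LU=U_t$, so $\sum_k c_k e(tP(k)+kx)$ is the $L^2$ (weak) solution of the initial value problem. *)

theory Defs
  imports "HOL-Analysis.Analysis" "HOL-Computational_Algebra.Polynomial"
begin

definition e :: "real \<Rightarrow> complex" where
  "e \<xi> = exp (2 * of_real pi * \<i> * of_real \<xi>)"

definition piecewise_C1_period :: "(real \<Rightarrow> complex) \<Rightarrow> bool" where
  "piecewise_C1_period f \<longleftrightarrow>
     (\<exists>(a::nat \<Rightarrow> real) n. a 0 = 0 \<and> a n = 1 \<and> (\<forall>i<n. a i < a (Suc i)) \<and>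
        (\<forall>i<n. \<exists>g. g C1_differentiable_on {a i..a (Suc i)} \<and>
                   (\<forall>x\<in>{a i<..<a (Suc i)}. f x = g x)))"

definition classD :: "(real \<Rightarrow> complex) \<Rightarrow> bool" where
  "classD f \<longleftrightarrow>
     f integrable_on {0..1} \<and>
     (\<forall>x. f (x + 1) = f x) \<and>
     piecewise_C1_period f \<and>
     (\<forall>x. \<exists>l r. (f \<longlongrightarrow> l) (at_left x) \<and> (f \<longlongrightarrow> r) (at_right x) \<and> f x = (l + r) / 2)"

definition fourier_coeff :: "(real \<Rightarrow> complex) \<Rightarrow> int \<Rightarrow> complex" where
  "fourier_coeff f k = integral {0..1} (\<lambda>x. f x * e (- (of_int k * x)))"

definition U_partial :: "int poly \<Rightarrow> (real \<Rightarrow> complex) \<Rightarrow> real \<Rightarrow> real \<Rightarrow> nat \<Rightarrow> complex" where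
  "U_partial P f t x K =
     (\<Sum>k = - int K..int K. fourier_coeff f k * e (t * of_int (poly P k) + of_int k * x))"

definition U :: "int poly \<Rightarrow> (real \<Rightarrow> complex) \<Rightarrow> real \<Rightarrow> real \<Rightarrow> complex" where
  "U P f t x = lim (U_partial P f t x)"

definition G :: "int poly \<Rightarrow> int \<Rightarrow> int \<Rightarrow> nat \<Rightarrow> complex" where
  "G P u v q = (\<Sum>w\<in>{0..<int q}. e (of_int (u * poly P w - v * w) / of_nat q))"

definition piecewise_constant :: "(real \<Rightarrow> complex) \<Rightarrow> bool" where
  "piecewise_constant g \<longleftrightarrow>
     (\<forall>a b. \<exists>S. finite S \<and>
        (\<forall>x y. a \<le> x \<and> x \<le> y \<and> y \<le> b \<and> {x..y} \<inter> S = {} \<longrightarrow> g x = g y))"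

end

theory Submission
  imports Defs
begin


lemma e_cis: "e x = cis (2 * pi * x)"
  unfolding e_def cis_conv_exp by (simp add: algebra_simps)

lemma e_add: "e (a + b) = e a * e b"
  by (simp add: e_cis distrib_left cis_mult)

lemma e_zero[simp]: "e 0 = 1"
  by (simp add: e_cis)

lemma e_int[simp]: "e (of_int n) = 1"
  by (simp add: e_cis)

lemma e_periodic: "e (x + of_int n) = e x"
  by (simp add: e_add)

lemma norm_e[simp]: "norm (e x) = 1"
  unfolding e_cis by (rule norm_cis)

lemma cnj_e: "cnj (e x) = e (- x)"
  unfolding e_cis using cis_cnj[of "2*pi*x"] by simp

lemma e_minus: "e (- x) = inverse (e x)"
  unfolding e_cis using cis_inverse[of "2*pi*x"] by simp

lemma e_nat_mult: "e (real m * x) = e x ^ m"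
proof -
  have "e x ^ m = cis (real m * (2*pi*x))" unfolding e_cis by (rule Complex.DeMoivre)
  thus ?thesis by (simp add: e_cis algebra_simps)
qed

lemma e_plus_e_minus: "e x + e (- x) = of_real (2 * cos (2 * pi * x))"
  by (simp add: e_cis complex_eq_iff)

lemma e_minus_e_minus: "e x - e (- x) = 2 * \<i> * of_real (sin (2 * pi * x))"
  by (simp add: e_cis complex_eq_iff)

lemma e_eq_1_iff: "e x = 1 \<longleftrightarrow> x \<in> \<int>"
proof
  assume "e x = 1"
  then have "exp (2 * of_real pi * \<i> * of_real x) = 1" by (simp add: e_def)
  then obtain n :: int where "Im (2 * of_real pi * \<i> * of_real x) = of_int (2*n) * pi"
    by (auto simp: exp_eq_1)
  then have "x = of_int n" by simp
  then show "x \<in> \<int>" by simp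
next
  assume "x \<in> \<int>" then show "e x = 1" by (auto elim: Ints_cases)
qed

lemma has_vector_derivative_e:
  "((\<lambda>t. e (c * t)) has_vector_derivative (2 * of_real pi * \<i> * of_real c * e (c * t))) (at t within S)"
proof -
  have "((\<lambda>z. exp (2 * of_real pi * \<i> * of_real c * z)) has_field_derivative
          (2 * of_real pi * \<i> * of_real c * exp (2 * of_real pi * \<i> * of_real c * of_real t))) (at (of_real t))"
    by (auto intro!: derivative_eq_intros)
  from has_vector_derivative_real_field[OF this]
  show ?thesis unfolding e_def
    by (auto simp: algebra_simps intro: has_vector_derivative_at_within)
qed

lemma continuous_on_e: "continuous_on S (\<lambda>t. e (c * t))"
  unfolding e_def by (intro continuous_intros)



definition Dk :: "nat \<Rightarrow> real \<Rightarrow> complex" where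
  "Dk K t = (\<Sum>k = - int K..int K. e (- (of_int k * t)))"

definition Dr :: "nat \<Rightarrow> real \<Rightarrow> real" where
  "Dr K t = 1 + (\<Sum>k=1..K. 2 * cos (2 * pi * real k * t))"

lemma sum_int_sym_Suc:
  "(\<Sum>k = - int (Suc K)..int (Suc K). g k) = (\<Sum>k = - int K..int K. g k) + g (int K + 1) + g (- (int K + 1))"
proof -
  have "{- int (Suc K)..int (Suc K)} = insert (int K + 1) (insert (- (int K + 1)) {- int K..int K})"
    by auto
  then show ?thesis by (simp add: algebra_simps)
qed

lemma Dk_Dr: "Dk K t = of_real (Dr K t)"
proof (induction K)
  case 0
  then show ?case by (simp add: Dk_def Dr_def)
next
  case (Suc K)
  have "Dk (Suc K) t = Dk K t + (e (- ((int K + 1) * t)) + e (-(- ((int K + 1) * t))))"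
    unfolding Dk_def sum_int_sym_Suc by (simp add: algebra_simps)
  also have "\<dots> = of_real (Dr K t) + of_real (2 * cos (2 * pi * (- ((int K + 1) * t))))"
    using Suc by (simp only: e_plus_e_minus)
  also have "\<dots> = of_real (Dr (Suc K) t)"
  proof -
    have "2 * pi * (- ((int K + 1) * t)) = - (2 * pi * real (Suc K) * t)" by simp
    then have "cos (2 * pi * (- ((int K + 1) * t))) = cos (2 * pi * real (Suc K) * t)"
      by (simp only: cos_minus)
    then show ?thesis by (simp add: Dr_def)
  qed
  finally show ?case .
qed

lemma Dr_sin: "Dr K t * sin (pi * t) = sin ((2 * real K + 1) * pi * t)"
proof (induction K)
  case 0
  then show ?case by (simp add: Dr_def)
next
  case (Suc K)
  have id: "sin (a + b) - sin (a - b) = 2 * cos a * sin b" for a b :: real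
    by (simp add: sin_add sin_diff)
  have "Dr (Suc K) t * sin (pi * t) = Dr K t * sin (pi * t) + 2 * cos (2 * pi * real (Suc K) * t) * sin (pi * t)"
    by (simp add: Dr_def algebra_simps)
  also have "\<dots> = sin ((2 * real K + 1) * pi * t) + (sin (2 * pi * real (Suc K) * t + pi * t) - sin (2 * pi * real (Suc K) * t - pi * t))"
    using Suc by (simp add: id)
  also have "\<dots> = sin ((2 * real (Suc K) + 1) * pi * t)"
    by (simp add: algebra_simps)
  finally show ?case .
qed

lemma Dr_integral:
  assumes "a \<le> b"
  shows "(Dr K has_integral ((b + (\<Sum>k=1..K. sin (2 * pi * real k * b) / (pi * real k))) -
                            (a + (\<Sum>k=1..K. sin (2 * pi * real k * a) / (pi * real k))))) {a..b}"
proof -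
  have "((\<lambda>t. t + (\<Sum>k=1..K. sin (2 * pi * real k * t) / (pi * real k))) has_real_derivative Dr K t) (at t)" for t
    unfolding Dr_def
    by (auto intro!: derivative_eq_intros sum.cong)
  then show ?thesis
    by (intro fundamental_theorem_of_calculus assms)
       (auto simp: has_real_derivative_iff_has_vector_derivative intro: has_vector_derivative_at_within)
qed

lemma sin_int_pi: "sin (2 * pi * real k * (1/2)) = 0" "sin (2 * pi * real k * 1) = 0" "sin (2 * pi * real k * 0) = 0"
proof -
  show "sin (2 * pi * real k * (1/2)) = 0" using sin_npi[of k] by (simp add: mult.commute)
  show "sin (2 * pi * real k * 1) = 0" using sin_npi[of "2*k"] by (simp add: mult.commute mult.left_commute)
qed simp

lemma sin_int_2pi: "sin (2 * pi * real k) = 0"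
  using sin_int_pi(2) by simp

lemma Dr_half1: "(Dr K has_integral 1/2) {0..1/2}"
  using Dr_integral[of 0 "1/2" K] by (simp add: sin_int_pi)

lemma Dr_half2: "(Dr K has_integral 1/2) {1/2..1}"
  using Dr_integral[of "1/2" 1 K] by (simp add: sin_int_pi sin_int_2pi)



lemma periodic_nat: "(\<forall>x::real. h (x + 1) = h x) \<Longrightarrow> h (x + real m) = h x"
proof (induction m arbitrary: x)
  case 0 then show ?case by simp
next
  case (Suc m)
  have "h (x + real (Suc m)) = h ((x + real m) + 1)" by (simp add: algebra_simps)
  also have "\<dots> = h (x + real m)" using Suc.prems by blast
  finally show ?case using Suc by simp
qed

lemma periodic_int: "(\<forall>x::real. h (x + 1) = h x) \<Longrightarrow> h (x + of_int n) = h x"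
proof (cases n rule: int_cases)
  case (nonneg m)
  assume "\<forall>x. h (x + 1) = h x"
  then show ?thesis using periodic_nat[of h x m] nonneg by simp
next
  case (neg m)
  assume p: "\<forall>x. h (x + 1) = h x"
  have "h (x + of_int n) = h ((x + of_int n) + real (Suc m))"
    using periodic_nat[OF p, of "x + of_int n" "Suc m"] by simp
  also have "(x + of_int n) + real (Suc m) = x" using neg by simp
  finally show ?thesis .
qed

lemma periodic_has_integral:
  fixes h :: "real \<Rightarrow> complex"
  assumes per: "\<forall>x. h (x + 1) = h x" and int: "h integrable_on {0..1}"
  shows "(h has_integral integral {0..1} h) {a..a+1}"
proof -
  define n where "n = floor a"
  define b where "b = a - of_int n"
  have b0: "0 \<le> b" and b1: "b < 1" unfolding b_def n_def by linarith+
  have i1: "h integrable_on {b..1}" and i2: "h integrable_on {0..b}"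
    using int b0 b1 by (auto intro: integrable_subinterval_real)
  have s: "integral {0..b} h + integral {b..1} h = integral {0..1} h"
    using Henstock_Kurzweil_Integration.integral_combine[OF b0 _ int] b1 by simp
  have "((\<lambda>x. h (x + -1)) has_integral integral {0..b} h) {0 - -1..b - -1}"
    using has_integral_shift_real_ivl[OF integrable_integral[OF i2], of "-1"] .
  moreover have "(\<lambda>x. h (x + -1)) = h"
  proof
    fix x show "h (x + -1) = h x" using per[rule_format, of "x - 1"] by simp
  qed
  ultimately have h2: "(h has_integral integral {0..b} h) {1..b+1}" by simp
  have "(h has_integral (integral {b..1} h + integral {0..b} h)) {b..b+1}"
    by (rule has_integral_combine[OF _ _ integrable_integral[OF i1] h2]) (use b0 b1 in auto)
  then have "(h has_integral integral {0..1} h) {b..b+1}"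
    using s by (simp add: add.commute)
  from has_integral_shift_real_ivl[OF this, of "- of_int n"]
  have "((\<lambda>x. h (x + - of_int n)) has_integral integral {0..1} h) {a..a+1}"
    by (simp add: b_def)
  moreover have "(\<lambda>x. h (x + - of_int n)) = h"
  proof
    fix x show "h (x + - of_int n) = h x"
      using periodic_int[OF per, of "x - of_int n" n] by simp
  qed
  ultimately show ?thesis by simp
qed

lemma e_has_integral:
  fixes m :: int
  shows "((\<lambda>t. e (of_int m * t)) has_integral (if m = 0 then 1 else 0)) {0..1}"
proof (cases "m = 0")
  case True
  then show ?thesis using has_integral_const_real[of "1::complex" 0 1] by simp
next
  case False
  define c :: complex where "c = 2 * of_real pi * \<i> * of_real (of_int m)"
  have c: "c \<noteq> 0" using False by (simp add: c_def)
  have "((\<lambda>t. e (of_int m * t) * inverse c) has_vector_derivative e (of_int m * t)) (at t within {0..1})" for t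
  proof -
    have "((\<lambda>t. e (of_int m * t) * inverse c) has_vector_derivative (c * e (of_int m * t)) * inverse c) (at t within {0..1})"
      unfolding c_def by (intro has_vector_derivative_mult_left has_vector_derivative_e)
    then show ?thesis using c by (simp add: field_simps)
  qed
  from fundamental_theorem_of_calculus[OF _ this]
  have "((\<lambda>t. e (of_int m * t)) has_integral (e (of_int m * 1) * inverse c - e (of_int m * 0) * inverse c)) {0..1}"
    by simp
  then show ?thesis using False by simp
qed



definition bm :: "(real \<Rightarrow> complex) \<Rightarrow> bool" where
  "bm f \<longleftrightarrow> f measurable_on {0..1} \<and> bounded (f ` {0..1})"

lemma bm_integrable: assumes "bm f" shows "f integrable_on {0..1}"
proof -
  obtain B where B: "\<And>x. x \<in> {0..1} \<Longrightarrow> norm (f x) \<le> B"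
    using assms unfolding bm_def bounded_iff by blast
  have "f absolutely_integrable_on {0..1}"
  proof (rule measurable_bounded_by_integrable_imp_absolutely_integrable)
    show "f \<in> borel_measurable (lebesgue_on {0..1})"
      using assms by (simp add: bm_def measurable_on_iff_borel_measurable)
    show "(\<lambda>x. B) integrable_on {0..1::real}"
      using has_integral_const_real[of B 0 1] by (auto simp: integrable_on_def)
  qed (use B in auto)
  then show ?thesis using absolutely_integrable_on_def by blast
qed

lemma bm_mult: assumes "bm f" "bm g" shows "bm (\<lambda>x. f x * g x)"
proof -
  obtain B where B: "\<And>x. x \<in> {0..1} \<Longrightarrow> norm (f x) \<le> B"
    using assms unfolding bm_def bounded_iff by blast
  obtain C where C: "\<And>x. x \<in> {0..1} \<Longrightarrow> norm (g x) \<le> C"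
    using assms unfolding bm_def bounded_iff by blast
  have "norm (f x * g x) \<le> B * C" if "x \<in> {0..1}" for x
    unfolding norm_mult by (rule mult_mono) (use B C that norm_ge_zero order_trans in blast)+
  then have "bounded ((\<lambda>x. f x * g x) ` {0..1})" unfolding bounded_iff by blast
  moreover have "(\<lambda>x. f x * g x) measurable_on {0..1}"
    using measurable_on_bilinear[OF bilinear_times] assms unfolding bm_def by blast
  ultimately show ?thesis by (simp add: bm_def)
qed

lemma bm_add: assumes "bm f" "bm g" shows "bm (\<lambda>x. f x + g x)"
proof -
  obtain B where B: "\<And>x. x \<in> {0..1} \<Longrightarrow> norm (f x) \<le> B"
    using assms unfolding bm_def bounded_iff by blast
  obtain C where C: "\<And>x. x \<in> {0..1} \<Longrightarrow> norm (g x) \<le> C"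
    using assms unfolding bm_def bounded_iff by blast
  have "norm (f x + g x) \<le> B + C" if "x \<in> {0..1}" for x
    using norm_triangle_ineq[of "f x" "g x"] B[OF that] C[OF that] by linarith
  then have "bounded ((\<lambda>x. f x + g x) ` {0..1})" unfolding bounded_iff by blast
  moreover have "(\<lambda>x. f x + g x) measurable_on {0..1}"
    using measurable_on_add assms unfolding bm_def by blast
  ultimately show ?thesis by (simp add: bm_def)
qed

lemma bm_const: "bm (\<lambda>x. c)"
  by (auto simp: bm_def bounded_iff)

lemma bm_uminus: assumes "bm f" shows "bm (\<lambda>x. - f x)"
  using bm_mult[OF bm_const[of "-1"] assms] by simp

lemma bm_diff: assumes "bm f" "bm g" shows "bm (\<lambda>x. f x - g x)"
  using bm_add[OF assms(1) bm_uminus[OF assms(2)]] by simp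

lemma bm_cnj: assumes "bm f" shows "bm (\<lambda>x. cnj (f x))"
proof -
  have "(cnj \<circ> f) measurable_on {0..1}"
  proof (rule measurable_on_compose_continuous_0)
    show "f measurable_on {0..1}" using assms by (simp add: bm_def)
    show "continuous_on UNIV cnj" by (intro continuous_on_cnj continuous_on_id)
  qed simp
  moreover have "bounded ((\<lambda>x. cnj (f x)) ` {0..1})"
    using assms unfolding bm_def bounded_iff by auto
  ultimately show ?thesis by (simp add: bm_def o_def)
qed

lemma bm_cont: assumes "continuous_on UNIV f" shows "bm f"
proof -
  have "f measurable_on UNIV" using assms by (rule continuous_imp_measurable_on)
  then have "(\<lambda>x. if x \<in> {0..1} then f x else 0) measurable_on UNIV"
    by (rule measurable_on_restrict) simp
  then have "f measurable_on {0..1}"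
    by (rule measurable_on_UNIV[THEN iffD1])
  moreover have "bounded (f ` {0..1})"
    by (intro compact_imp_bounded compact_continuous_image continuous_on_subset[OF assms]) auto
  ultimately show ?thesis by (simp add: bm_def)
qed

lemma bm_e: "bm (\<lambda>t. e (c * t))"
  by (rule bm_cont) (rule continuous_on_e)

lemma bm_sum: assumes "\<And>i. i \<in> A \<Longrightarrow> bm (g i)" shows "bm (\<lambda>x. \<Sum>i\<in>A. g i x)"
  using assms
proof (induction A rule: infinite_finite_induct)
  case (infinite A) then show ?case by (simp add: bm_const)
next
  case empty then show ?case by (simp add: bm_const)
next
  case (insert a A) then show ?case by (simp add: bm_add)
qed

definition ip :: "(real \<Rightarrow> complex) \<Rightarrow> (real \<Rightarrow> complex) \<Rightarrow> complex" where
  "ip f g = integral {0..1} (\<lambda>t. f t * cnj (g t))"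

lemma bm_ip_integrable: "bm f \<Longrightarrow> bm g \<Longrightarrow> (\<lambda>t. f t * cnj (g t)) integrable_on {0..1}"
  by (intro bm_integrable bm_mult bm_cnj)

lemma ip_diff_left: "bm f \<Longrightarrow> bm g \<Longrightarrow> bm h \<Longrightarrow> ip (\<lambda>t. f t - g t) h = ip f h - ip g h"
  unfolding ip_def by (simp add: left_diff_distrib integral_diff bm_ip_integrable)

lemma ip_diff_right: "bm f \<Longrightarrow> bm g \<Longrightarrow> bm h \<Longrightarrow> ip f (\<lambda>t. g t - h t) = ip f g - ip f h"
  unfolding ip_def by (simp add: right_diff_distrib integral_diff bm_ip_integrable)

lemma ip_sum_left:
  fixes a :: "'a \<Rightarrow> complex"
  assumes "finite A" "\<And>n. n \<in> A \<Longrightarrow> bm (u n)" "bm h"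
  shows "ip (\<lambda>t. \<Sum>n\<in>A. a n * u n t) h = (\<Sum>n\<in>A. a n * ip (u n) h)"
proof -
  have "ip (\<lambda>t. \<Sum>n\<in>A. a n * u n t) h = integral {0..1} (\<lambda>t. \<Sum>n\<in>A. a n * (u n t * cnj (h t)))"
    unfolding ip_def by (simp add: sum_distrib_right mult.assoc)
  also have "\<dots> = (\<Sum>n\<in>A. integral {0..1} (\<lambda>t. a n * (u n t * cnj (h t))))"
    by (rule integral_sum) (use assms in \<open>auto intro!: integrable_on_mult_right bm_ip_integrable\<close>)
  also have "\<dots> = (\<Sum>n\<in>A. a n * ip (u n) h)"
    unfolding ip_def by (intro sum.cong refl integral_mult_right)
  finally show ?thesis .
qed

lemma ip_cnj: "ip g f = cnj (ip f g)"
  unfolding ip_def integral_cnj by (simp add: mult.commute)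

lemma ip_sum_right:
  fixes a :: "'a \<Rightarrow> complex"
  assumes "finite A" "\<And>n. n \<in> A \<Longrightarrow> bm (u n)" "bm h"
  shows "ip h (\<lambda>t. \<Sum>n\<in>A. a n * u n t) = (\<Sum>n\<in>A. cnj (a n) * ip h (u n))"
proof -
  have "ip h (\<lambda>t. \<Sum>n\<in>A. a n * u n t) = cnj (ip (\<lambda>t. \<Sum>n\<in>A. a n * u n t) h)"
    by (rule ip_cnj)
  also have "\<dots> = cnj (\<Sum>n\<in>A. a n * ip (u n) h)"
    using ip_sum_left[OF assms, where a=a] by simp
  also have "\<dots> = (\<Sum>n\<in>A. cnj (a n) * cnj (ip (u n) h))"
    by simp
  also have "\<dots> = (\<Sum>n\<in>A. cnj (a n) * ip h (u n))"
    using ip_cnj[of h] by simp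
  finally show ?thesis .
qed



lemma ip_self_Re_nonneg: assumes "bm g" shows "0 \<le> Re (ip g g)"
proof -
  have "((\<lambda>t. g t * cnj (g t)) has_integral ip g g) {0..1}"
    unfolding ip_def using bm_ip_integrable[OF assms assms] by (rule integrable_integral)
  from has_integral_Re[OF this] show ?thesis
    by (rule has_integral_nonneg) (simp add: complex_mult_cnj)
qed

lemma RL:
  assumes "bm X" "s \<noteq> 0"
  shows "(\<lambda>n. integral {0..1} (\<lambda>t. X t * e (of_int s * real n * t))) \<longlonglongrightarrow> 0"
proof -
  define b where "b n t = e ((- (of_int s * real n)) * t)" for n t
  define c where "c n = ip X (b n)" for n
  have bmb: "bm (b n)" for n unfolding b_def by (rule bm_e)
  have cn: "c n = integral {0..1} (\<lambda>t. X t * e (of_int s * real n * t))" for n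
    unfolding c_def ip_def b_def cnj_e by simp
  have orth: "ip (b n) (b m) = (if n = m then 1 else 0)" for n m
  proof -
    have "ip (b n) (b m) = integral {0..1} (\<lambda>t. e (of_int (s * (int m - int n)) * t))"
      unfolding ip_def b_def cnj_e
      by (intro integral_cong) (simp add: e_add[symmetric] algebra_simps)
    also have "\<dots> = (if n = m then 1 else 0)"
      using integral_unique[OF e_has_integral[of "s * (int m - int n)"]] assms(2) by auto
    finally show ?thesis .
  qed
  have bound: "(\<Sum>n<N. (cmod (c n))\<^sup>2) \<le> Re (ip X X)" for N
  proof -
    define S where "S t = (\<Sum>n\<in>{..<N}. c n * b n t)" for t
    have bmS: "bm S" unfolding S_def by (intro bm_sum bm_mult bm_const bmb)
    have bmd: "bm (\<lambda>t. X t - S t)" by (intro bm_diff assms bmS)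
    have 1: "ip X S = (\<Sum>n\<in>{..<N}. cnj (c n) * c n)"
      unfolding S_def by (subst ip_sum_right) (auto simp: bmb assms c_def)
    have 2: "ip S X = (\<Sum>n\<in>{..<N}. c n * cnj (c n))"
      using 1 ip_cnj[of S X] by (simp add: mult.commute)
    have 3: "ip S S = (\<Sum>n\<in>{..<N}. c n * cnj (c n))"
    proof -
      have "ip S S = (\<Sum>n\<in>{..<N}. c n * ip (b n) S)"
        unfolding S_def[abs_def] by (subst ip_sum_left) (auto simp: bmb bmS[unfolded S_def])
      also have "\<dots> = (\<Sum>n\<in>{..<N}. c n * (\<Sum>m\<in>{..<N}. cnj (c m) * ip (b n) (b m)))"
        unfolding S_def by (intro sum.cong refl arg_cong2[where f="(*)"] ip_sum_right) (auto simp: bmb)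
      also have "\<dots> = (\<Sum>n\<in>{..<N}. c n * cnj (c n))"
        by (intro sum.cong refl) (simp add: orth if_distrib cong: if_cong)
      finally show ?thesis .
    qed
    have "ip (\<lambda>t. X t - S t) (\<lambda>t. X t - S t) = ip X X - ip X S - (ip S X - ip S S)"
      by (simp add: ip_diff_left ip_diff_right assms bmS bmd)
    also have "\<dots> = ip X X - (\<Sum>n\<in>{..<N}. c n * cnj (c n))"
      by (simp add: 1 2 3 mult.commute)
    finally have "Re (ip (\<lambda>t. X t - S t) (\<lambda>t. X t - S t)) = Re (ip X X) - (\<Sum>n<N. Re (c n * cnj (c n)))"
      by (simp add: Re_sum)
    moreover have "Re (z * cnj z) = (cmod z)\<^sup>2" for z by (simp add: complex_mult_cnj cmod_power2)
    ultimately have "Re (ip (\<lambda>t. X t - S t) (\<lambda>t. X t - S t)) = Re (ip X X) - (\<Sum>n<N. (cmod (c n))\<^sup>2)"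
      by simp
    with ip_self_Re_nonneg[OF bmd] show ?thesis by linarith
  qed
  have "summable (\<lambda>n. (cmod (c n))\<^sup>2)"
    by (rule summableI_nonneg_bounded[OF _ bound]) simp
  then have "(\<lambda>n. (cmod (c n))\<^sup>2) \<longlonglongrightarrow> 0" by (rule summable_LIMSEQ_zero)
  then have "(\<lambda>n. sqrt ((cmod (c n))\<^sup>2)) \<longlonglongrightarrow> sqrt 0" by (rule tendsto_real_sqrt)
  then have "(\<lambda>n. norm (c n)) \<longlonglongrightarrow> 0" by simp
  then have "c \<longlonglongrightarrow> 0" by (rule tendsto_norm_zero_cancel)
  then show ?thesis unfolding cn[abs_def] .
qed



lemma C1_lip:
  fixes g :: "real \<Rightarrow> complex"
  assumes der: "\<And>x. x\<in>{p..q} \<Longrightarrow> (g has_vector_derivative D x) (at x)"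
    and bnd: "\<And>x. x\<in>{p..q} \<Longrightarrow> norm (D x) \<le> C"
    and x: "x\<in>{p..q}" and y: "y \<in> {p..q}"
  shows "norm (g x - g y) \<le> C * norm (x - y)"
proof (rule differentiable_bound[where f' = "\<lambda>x h. h *\<^sub>R D x"])
  show "convex {p..q}" by simp
  fix u assume u: "u \<in> {p..q}"
  show "(g has_derivative (\<lambda>h. h *\<^sub>R D u)) (at u within {p..q})"
    using has_vector_derivative_at_within[OF der[OF u]] by (simp add: has_vector_derivative_def)
  have "onorm (\<lambda>h::real. h *\<^sub>R D u) = onorm (\<lambda>h::real. h) * norm (D u)"
    by (rule onorm_scaleR_left) (rule bounded_linear_ident)
  also have "\<dots> \<le> 1 * norm (D u)"
    by (rule mult_right_mono[OF onorm_id_le]) simp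
  also have "\<dots> \<le> C" using bnd[OF u] by simp
  finally show "onorm (\<lambda>h. h *\<^sub>R D u) \<le> C" .
qed (use x y in auto)

lemma piece_index: "a 0 \<le> (z::real) \<Longrightarrow> z < a n \<Longrightarrow> \<exists>i<n. a i \<le> z \<and> z < a (Suc i)"
proof (induction n)
  case 0 then show ?case by simp
next
  case (Suc n)
  show ?case
  proof (cases "z < a n")
    case True then show ?thesis using Suc by (meson less_SucI)
  next
    case False then show ?thesis using Suc by (intro exI[of _ n]) auto
  qed
qed

lemma piece_index_left: "a 0 < (z::real) \<Longrightarrow> z \<le> a n \<Longrightarrow> \<exists>i<n. a i < z \<and> z \<le> a (Suc i)"
proof (induction n)
  case 0 then show ?case by simp
next
  case (Suc n)
  show ?case
  proof (cases "z \<le> a n")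
    case True then show ?thesis using Suc by (meson less_SucI)
  next
    case False then show ?thesis using Suc by (intro exI[of _ n]) auto
  qed
qed



lemma classD_local:
  assumes "classD f"
  shows "\<exists>B. \<forall>y. (\<exists>\<delta>>0. \<exists>C r. (f \<longlongrightarrow> r) (at_right y) \<and> norm r \<le> B \<and>
                     (\<forall>t. 0 < t \<and> t < \<delta> \<longrightarrow> norm (f (y + t) - r) \<le> C * t)) \<and>
                 (\<exists>\<delta>>0. \<exists>C l. (f \<longlongrightarrow> l) (at_left y) \<and> norm l \<le> B \<and>
                     (\<forall>t. 0 < t \<and> t < \<delta> \<longrightarrow> norm (f (y - t) - l) \<le> C * t))"
proof -
  from assms have per: "\<forall>x. f (x + 1) = f x" and pw: "piecewise_C1_period f"
    by (auto simp: classD_def)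
  from pw obtain a n where a0: "a 0 = 0" and an: "a n = 1" and mono: "\<forall>i<n. a i < a (Suc i)"
    and pcs: "\<forall>i<n. \<exists>g. g C1_differentiable_on {a i..a (Suc i)} \<and> (\<forall>x\<in>{a i<..<a (Suc i)}. f x = g x)"
    unfolding piecewise_C1_period_def by auto
  have "\<forall>i. \<exists>gD. i < n \<longrightarrow> (\<forall>x\<in>{a i..a (Suc i)}. (fst gD has_vector_derivative snd gD x) (at x)) \<and>
            continuous_on {a i..a (Suc i)} (snd gD) \<and> (\<forall>x\<in>{a i<..<a (Suc i)}. f x = fst gD x)"
  proof
    fix i
    show "\<exists>gD. i < n \<longrightarrow> (\<forall>x\<in>{a i..a (Suc i)}. (fst gD has_vector_derivative snd gD x) (at x)) \<and>
            continuous_on {a i..a (Suc i)} (snd gD) \<and> (\<forall>x\<in>{a i<..<a (Suc i)}. f x = fst gD x)"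
    proof (cases "i < n")
      case True
      then obtain g where g: "g C1_differentiable_on {a i..a (Suc i)}" "\<forall>x\<in>{a i<..<a (Suc i)}. f x = g x"
        using pcs by auto
      then obtain D where "\<forall>x\<in>{a i..a (Suc i)}. (g has_vector_derivative D x) (at x)" "continuous_on {a i..a (Suc i)} D"
        unfolding C1_differentiable_on_def by auto
      then show ?thesis using g by (intro exI[of _ "(g, D)"]) auto
    qed auto
  qed
  from choice[OF this] obtain gD where gD: "\<And>i. i < n \<Longrightarrow> (\<forall>x\<in>{a i..a (Suc i)}. (fst (gD i) has_vector_derivative snd (gD i) x) (at x)) \<and>
            continuous_on {a i..a (Suc i)} (snd (gD i)) \<and> (\<forall>x\<in>{a i<..<a (Suc i)}. f x = fst (gD i) x)"
    by blast
  define G where "G i = fst (gD i)" for i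
  define D where "D i = snd (gD i)" for i
  have Gder: "\<And>i x. i < n \<Longrightarrow> x \<in> {a i..a (Suc i)} \<Longrightarrow> (G i has_vector_derivative D i x) (at x)"
    and Dcont: "\<And>i. i < n \<Longrightarrow> continuous_on {a i..a (Suc i)} (D i)"
    and fG: "\<And>i x. i < n \<Longrightarrow> x \<in> {a i<..<a (Suc i)} \<Longrightarrow> f x = G i x"
    using gD unfolding G_def D_def by auto
  have Gcont: "continuous_on {a i..a (Suc i)} (G i)" if "i < n" for i
    by (rule continuous_on_vector_derivative) (use Gder[OF that] has_vector_derivative_at_within in blast)
  have "bounded (\<Union>i\<in>{..<n}. G i ` {a i..a (Suc i)})"
    by (rule bounded_UN) (auto intro!: compact_imp_bounded compact_continuous_image Gcont)
  then obtain B where B0: "\<forall>x\<in>(\<Union>i\<in>{..<n}. G i ` {a i..a (Suc i)}). norm x \<le> B"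
    unfolding bounded_iff by blast
  have B: "\<And>i x. i < n \<Longrightarrow> x \<in> {a i..a (Suc i)} \<Longrightarrow> norm (G i x) \<le> B"
    using B0 by blast
  have "bounded (\<Union>i\<in>{..<n}. D i ` {a i..a (Suc i)})"
    by (rule bounded_UN) (auto intro!: compact_imp_bounded compact_continuous_image Dcont)
  then obtain C where C0: "\<forall>x\<in>(\<Union>i\<in>{..<n}. D i ` {a i..a (Suc i)}). norm x \<le> C"
    unfolding bounded_iff by blast
  have C: "\<And>i x. i < n \<Longrightarrow> x \<in> {a i..a (Suc i)} \<Longrightarrow> norm (D i x) \<le> C"
    using C0 by blast
  have Glip: "norm (G i x - G i y) \<le> C * norm (x - y)" if "i < n" "x \<in> {a i..a (Suc i)}" "y \<in> {a i..a (Suc i)}" for i x y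
    by (rule C1_lip[where D="D i"]) (use that Gder C in auto)
  have Giscont: "isCont (G i) x" if "i < n" "x \<in> {a i..a (Suc i)}" for i x
    using has_vector_derivative_continuous[OF Gder[OF that]] .
  show ?thesis
  proof (rule exI[of _ B], intro allI conjI)
    fix y :: real
    show "\<exists>\<delta>>0. \<exists>C r. (f \<longlongrightarrow> r) (at_right y) \<and> norm r \<le> B \<and>
                     (\<forall>t. 0 < t \<and> t < \<delta> \<longrightarrow> norm (f (y + t) - r) \<le> C * t)"
    proof -
      define k where "k = floor y"
      define z where "z = y - of_int k"
      have z0: "0 \<le> z" and z1: "z < 1" unfolding z_def k_def by linarith+
      obtain i where i: "i < n" "a i \<le> z" "z < a (Suc i)"
        using piece_index[of a z n] z0 z1 a0 an by auto
      have zin: "z \<in> {a i..a (Suc i)}" using i by auto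
      have feq: "f (y + t) = G i (z + t)" if "0 < t" "t < a (Suc i) - z" for t
      proof -
        have "f (y + t) = f ((z + t) + of_int k)" by (simp add: z_def)
        also have "\<dots> = f (z + t)" by (rule periodic_int[OF per])
        also have "\<dots> = G i (z + t)" by (rule fG) (use i that in auto)
        finally show ?thesis .
      qed
      have lim: "(f \<longlongrightarrow> G i z) (at_right y)"
      proof (rule Lim_transform_eventually)
        have "((\<lambda>x. x - of_int k) \<longlongrightarrow> z) (at_right y)"
          unfolding z_def by (intro tendsto_intros)
        then show "((\<lambda>x. G i (x - of_int k)) \<longlongrightarrow> G i z) (at_right y)"
          by (rule isCont_tendsto_compose[OF Giscont[OF i(1) zin]])
        have "\<forall>\<^sub>F x in at_right y. x \<in> {y<..<y + (a (Suc i) - z)}"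
          by (rule eventually_at_right_real) (use i in auto)
        then show "\<forall>\<^sub>F x in at_right y. G i (x - of_int k) = f x"
        proof (rule eventually_mono)
          fix x assume "x \<in> {y<..<y + (a (Suc i) - z)}"
          then show "G i (x - of_int k) = f x" using feq[of "x - y"] by (simp add: z_def)
        qed
      qed
      have lip: "\<forall>t. 0 < t \<and> t < a (Suc i) - z \<longrightarrow> norm (f (y + t) - G i z) \<le> C * t"
      proof (intro allI impI)
        fix t assume t: "0 < t \<and> t < a (Suc i) - z"
        have "norm (f (y + t) - G i z) = norm (G i (z + t) - G i z)" using feq t by simp
        also have "\<dots> \<le> C * norm ((z + t) - z)" by (rule Glip) (use i t in auto)
        also have "\<dots> = C * t" using t by simp
        finally show "norm (f (y + t) - G i z) \<le> C * t" .
      qed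
      show ?thesis using lim B[OF i(1) zin] i lip
        by (intro exI[of _ "a (Suc i) - z"] exI[of _ C] exI[of _ "G i z"]) auto
    qed
    show "\<exists>\<delta>>0. \<exists>C l. (f \<longlongrightarrow> l) (at_left y) \<and> norm l \<le> B \<and>
                     (\<forall>t. 0 < t \<and> t < \<delta> \<longrightarrow> norm (f (y - t) - l) \<le> C * t)"
    proof -
      define k where "k = ceiling y - 1"
      define z where "z = y - of_int k"
      have z0: "0 < z" and z1: "z \<le> 1" unfolding z_def k_def by linarith+
      obtain i where i: "i < n" "a i < z" "z \<le> a (Suc i)"
        using piece_index_left[of a z n] z0 z1 a0 an by auto
      have zin: "z \<in> {a i..a (Suc i)}" using i by auto
      have feq: "f (y - t) = G i (z - t)" if "0 < t" "t < z - a i" for t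
      proof -
        have "f (y - t) = f ((z - t) + of_int k)" by (simp add: z_def)
        also have "\<dots> = f (z - t)" by (rule periodic_int[OF per])
        also have "\<dots> = G i (z - t)" by (rule fG) (use i that in auto)
        finally show ?thesis .
      qed
      have lim: "(f \<longlongrightarrow> G i z) (at_left y)"
      proof (rule Lim_transform_eventually)
        have "((\<lambda>x. x - of_int k) \<longlongrightarrow> z) (at_left y)"
          unfolding z_def by (intro tendsto_intros)
        then show "((\<lambda>x. G i (x - of_int k)) \<longlongrightarrow> G i z) (at_left y)"
          by (rule isCont_tendsto_compose[OF Giscont[OF i(1) zin]])
        have "\<forall>\<^sub>F x in at_left y. x \<in> {y - (z - a i)<..<y}"
          by (rule eventually_at_left_real) (use i in auto)
        then show "\<forall>\<^sub>F x in at_left y. G i (x - of_int k) = f x"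
        proof (rule eventually_mono)
          fix x assume "x \<in> {y - (z - a i)<..<y}"
          then show "G i (x - of_int k) = f x" using feq[of "y - x"] by (simp add: z_def)
        qed
      qed
      have lip: "\<forall>t. 0 < t \<and> t < z - a i \<longrightarrow> norm (f (y - t) - G i z) \<le> C * t"
      proof (intro allI impI)
        fix t assume t: "0 < t \<and> t < z - a i"
        have "norm (f (y - t) - G i z) = norm (G i (z - t) - G i z)" using feq t by simp
        also have "\<dots> \<le> C * norm ((z - t) - z)" by (rule Glip) (use i t in auto)
        also have "\<dots> = C * t" using t by simp
        finally show "norm (f (y - t) - G i z) \<le> C * t" .
      qed
      show ?thesis using lim B[OF i(1) zin] i lip
        by (intro exI[of _ "z - a i"] exI[of _ C] exI[of _ "G i z"]) auto
    qed
  qed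
qed



lemma sin_ge_x_cos:
  assumes "0 \<le> x" "x \<le> pi"
  shows "x * cos x \<le> sin x"
proof -
  have "(\<lambda>x. sin x - x * cos x) 0 \<le> (\<lambda>x. sin x - x * cos x) x"
  proof (rule DERIV_nonneg_imp_nondecreasing[OF assms(1)])
    fix u assume u0: "0 \<le> u" and u1: "u \<le> x"
    then have u: "0 \<le> u \<and> u \<le> x" by simp
    have "((\<lambda>x. sin x - x * cos x) has_real_derivative (u * sin u)) (at u)"
      by (auto intro!: derivative_eq_intros)
    moreover have "0 \<le> u * sin u" using u assms by (intro mult_nonneg_nonneg sin_ge_zero) auto
    ultimately show "\<exists>y. ((\<lambda>x. sin x - x * cos x) has_real_derivative y) (at u) \<and> 0 \<le> y" by blast
  qed
  then show ?thesis by simp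
qed

lemma sin_pi_ge:
  assumes "0 \<le> t" "t \<le> 1/2"
  shows "t \<le> sin (pi * t)"
proof (cases "t \<le> 1/3")
  case True
  have "cos (pi / 3) \<le> cos (pi * t)"
    by (rule cos_monotone_0_pi_le) (use assms True in auto)
  then have c: "1/2 \<le> cos (pi * t)" by (simp add: cos_60)
  have "2 * t \<le> pi * t" using assms pi_gt3 by (intro mult_right_mono) auto
  then have "t \<le> pi * t * (1/2)" by simp
  also have "\<dots> \<le> pi * t * cos (pi * t)" by (rule mult_left_mono[OF c]) (use assms in simp)
  also have "\<dots> \<le> sin (pi * t)" by (rule sin_ge_x_cos) (use assms in simp_all)
  finally show ?thesis .
next
  case False
  have "sin (pi / 3) \<le> sin (pi * t)"
  proof (rule sin_monotone_2pi_le)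
    show "- (pi / 2) \<le> pi / 3" using pi_gt_zero by linarith
    show "pi / 3 \<le> pi * t" using False pi_gt_zero by (simp add: field_simps)
    show "pi * t \<le> pi / 2" using assms pi_gt_zero by (simp add: field_simps)
  qed
  moreover have "1/2 \<le> sin (pi / 3)"
  proof -
    have "1 \<le> sqrt 3" by simp
    then show ?thesis by (simp add: sin_60)
  qed
  ultimately show ?thesis using assms by linarith
qed



lemma ratio_bound:
  fixes \<phi> :: complex
  assumes t: "0 < t" "t \<le> s" and b: "norm \<phi> \<le> 2 * B" and c: "t < \<delta> \<Longrightarrow> norm \<phi> \<le> C * t" and d: "0 < \<delta>"
  shows "norm \<phi> / s \<le> abs C + 2 * B / \<delta>"
proof -
  have B0: "0 \<le> B" using b norm_ge_zero[of \<phi>] by linarith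
  have "norm \<phi> / s \<le> norm \<phi> / t" using t by (intro divide_left_mono) auto
  also have "\<dots> \<le> abs C + 2 * B / \<delta>"
  proof (cases "t < \<delta>")
    case True
    then have "norm \<phi> / t \<le> C" using c t by (simp add: divide_le_eq mult.commute)
    moreover have "0 \<le> 2 * B / \<delta>" using B0 d by simp
    ultimately show ?thesis by linarith
  next
    case False
    have "norm \<phi> / t \<le> 2 * B / t" using b t by (simp add: divide_right_mono)
    also have "\<dots> \<le> 2 * B / \<delta>" using False t d B0 by (intro divide_left_mono) auto
    finally show ?thesis by linarith
  qed
  finally show ?thesis .
qed

lemma coeff_shift:
  assumes per: "\<forall>x. f (x + 1) = f x" and bmf: "bm f"
  shows "((\<lambda>t. f (y + t) * e ((- of_int k) * t)) has_integral fourier_coeff f k * e (of_int k * y)) {0..1}"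
proof -
  define h where "h s = f s * e ((- of_int k) * s) * e (of_int k * y)" for s
  have hper: "\<forall>x. h (x + 1) = h x"
  proof
    fix x
    have "e ((- of_int k) * (x + 1)) = e ((- of_int k) * x + of_int (- k))" by (simp add: algebra_simps)
    also have "\<dots> = e ((- of_int k) * x)" by (rule e_periodic)
    finally show "h (x + 1) = h x" unfolding h_def using per by simp
  qed
  have hint: "h integrable_on {0..1}"
    unfolding h_def by (intro bm_integrable bm_mult bmf bm_e bm_const)
  have I: "integral {0..1} h = fourier_coeff f k * e (of_int k * y)"
    unfolding h_def fourier_coeff_def by (simp add: integral_mult_left)
  have "(h has_integral fourier_coeff f k * e (of_int k * y)) {y..y+1}"
    using periodic_has_integral[OF hper hint, of y] I by simp
  from has_integral_shift_real_ivl[OF this, of y]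
  have "((\<lambda>x. h (x + y)) has_integral fourier_coeff f k * e (of_int k * y)) {0..1}" by simp
  moreover have "h (x + y) = f (y + x) * e ((- of_int k) * x)" for x
  proof -
    have "e ((- of_int k) * (x + y)) * e (of_int k * y) = e ((- of_int k) * x)"
      by (simp add: e_add[symmetric] algebra_simps)
    then show ?thesis unfolding h_def by (simp add: add.commute mult.assoc)
  qed
  ultimately show ?thesis by simp
qed

lemma bm_Dk: "bm (Dk K)"
proof -
  have "Dk K = (\<lambda>t. \<Sum>k = - int K..int K. e ((- of_int k) * t))"
    unfolding Dk_def by auto
  moreover have "bm (\<lambda>t. \<Sum>k = - int K..int K. e ((- of_int k) * t))"
    by (intro bm_sum bm_e)
  ultimately show ?thesis by simp
qed



lemma dirichlet:
  assumes cD: "classD f"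
  shows "(\<lambda>K. \<Sum>k = - int K..int K. fourier_coeff f k * e (of_int k * y)) \<longlonglongrightarrow> f y"
proof -
  have per: "\<forall>x. f (x + 1) = f x" and int01: "f integrable_on {0..1}"
    and mid: "\<forall>x. \<exists>l r. (f \<longlongrightarrow> l) (at_left x) \<and> (f \<longlongrightarrow> r) (at_right x) \<and> f x = (l + r) / 2"
    using cD by (auto simp: classD_def)
  obtain B where B: "\<forall>y. (\<exists>\<delta>>0. \<exists>C r. (f \<longlongrightarrow> r) (at_right y) \<and> norm r \<le> B \<and>
                     (\<forall>t. 0 < t \<and> t < \<delta> \<longrightarrow> norm (f (y + t) - r) \<le> C * t)) \<and>
                 (\<exists>\<delta>>0. \<exists>C l. (f \<longlongrightarrow> l) (at_left y) \<and> norm l \<le> B \<and>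
                     (\<forall>t. 0 < t \<and> t < \<delta> \<longrightarrow> norm (f (y - t) - l) \<le> C * t))"
    using classD_local[OF cD] by blast
  have fmid: "f x = (l + r) / 2" if "(f \<longlongrightarrow> l) (at_left x)" "(f \<longlongrightarrow> r) (at_right x)" for x l r
  proof -
    obtain l' r' where lr: "(f \<longlongrightarrow> l') (at_left x)" "(f \<longlongrightarrow> r') (at_right x)" "f x = (l' + r') / 2"
      using mid by blast
    have "l' = l" by (rule tendsto_unique[OF _ lr(1) that(1)]) simp
    moreover have "r' = r" by (rule tendsto_unique[OF _ lr(2) that(2)]) simp
    ultimately show ?thesis using lr(3) by simp
  qed
  have fbound: "norm (f x) \<le> B" for x
  proof -
    have Bx: "(\<exists>\<delta>>0. \<exists>C r. (f \<longlongrightarrow> r) (at_right x) \<and> norm r \<le> B \<and>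
                     (\<forall>t. 0 < t \<and> t < \<delta> \<longrightarrow> norm (f (x + t) - r) \<le> C * t)) \<and>
                 (\<exists>\<delta>>0. \<exists>C l. (f \<longlongrightarrow> l) (at_left x) \<and> norm l \<le> B \<and>
                     (\<forall>t. 0 < t \<and> t < \<delta> \<longrightarrow> norm (f (x - t) - l) \<le> C * t))"
      using B by blast
    then obtain r l where r: "(f \<longlongrightarrow> r) (at_right x)" "norm r \<le> B"
      and l: "(f \<longlongrightarrow> l) (at_left x)" "norm l \<le> B" by blast
    have "norm (f x) = norm (l + r) / 2" by (subst fmid[OF l(1) r(1)]) (simp add: norm_divide)
    also have "\<dots> \<le> (norm l + norm r) / 2" using norm_triangle_ineq[of l r] by simp
    also have "\<dots> \<le> B" using r l by simp
    finally show ?thesis .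
  qed
  have B0: "0 \<le> B" using fbound[of 0] norm_ge_zero[of "f 0"] by linarith
  have By: "(\<exists>\<delta>>0. \<exists>C r. (f \<longlongrightarrow> r) (at_right y) \<and> norm r \<le> B \<and>
                     (\<forall>t. 0 < t \<and> t < \<delta> \<longrightarrow> norm (f (y + t) - r) \<le> C * t)) \<and>
                 (\<exists>\<delta>>0. \<exists>C l. (f \<longlongrightarrow> l) (at_left y) \<and> norm l \<le> B \<and>
                     (\<forall>t. 0 < t \<and> t < \<delta> \<longrightarrow> norm (f (y - t) - l) \<le> C * t))"
    using B by blast
  then obtain \<delta>1 C1 r where d1: "0 < \<delta>1" and rlim: "(f \<longlongrightarrow> r) (at_right y)" and rB: "norm r \<le> B"
    and lip1: "\<forall>t. 0 < t \<and> t < \<delta>1 \<longrightarrow> norm (f (y + t) - r) \<le> C1 * t" by blast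
  from By obtain \<delta>2 C2 l where d2: "0 < \<delta>2" and llim: "(f \<longlongrightarrow> l) (at_left y)" and lB: "norm l \<le> B"
    and lip2: "\<forall>t. 0 < t \<and> t < \<delta>2 \<longrightarrow> norm (f (y - t) - l) \<le> C2 * t" by blast
  have fy: "f y = (l + r) / 2" by (rule fmid[OF llim rlim])

  have bmf: "bm f"
  proof -
    have "f measurable_on {0..1}"
      using integrable_imp_measurable[OF int01] by (simp add: measurable_on_iff_borel_measurable)
    moreover have "bounded (f ` {0..1})" using fbound unfolding bounded_iff by blast
    ultimately show ?thesis by (simp add: bm_def)
  qed
  define g where "g t = f (y + t)" for t
  have coef: "((\<lambda>t. g t * e ((- of_int k) * t)) has_integral fourier_coeff f k * e (of_int k * y)) {0..1}" for k
    unfolding g_def by (rule coeff_shift[OF per bmf])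
  have bmg: "bm g"
  proof -
    have "g integrable_on {0..1}" using coef[of 0] by (auto simp: integrable_on_def)
    then have "g measurable_on {0..1}"
      using integrable_imp_measurable by (simp add: measurable_on_iff_borel_measurable)
    moreover have "bounded (g ` {0..1})" using fbound unfolding bounded_iff g_def by blast
    ultimately show ?thesis by (simp add: bm_def)
  qed

  define SK where "SK K = (\<Sum>k = - int K..int K. fourier_coeff f k * e (of_int k * y))" for K
  have step2: "((\<lambda>t. g t * Dk K t) has_integral SK K) {0..1}" for K
  proof -
    have "((\<lambda>t. \<Sum>k = - int K..int K. g t * e ((- of_int k) * t)) has_integral SK K) {0..1}"
      unfolding SK_def by (intro has_integral_sum finite_atLeastAtMost_int coef)
    moreover have "(\<lambda>t. \<Sum>k = - int K..int K. g t * e ((- of_int k) * t)) = (\<lambda>t. g t * Dk K t)"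
      by (auto simp: Dk_def sum_distrib_left)
    ultimately show ?thesis by simp
  qed
  define cst where "cst t = (if t \<le> 1/2 then r else l)" for t :: real
  have step3: "((\<lambda>t. cst t * Dk K t) has_integral f y) {0..1}" for K
  proof -
    have h1: "((\<lambda>t. r * of_real (Dr K t)) has_integral r * of_real (1/2)) {0..1/2}"
      by (intro has_integral_mult_right has_integral_of_real Dr_half1)
    have h1': "((\<lambda>t. cst t * Dk K t) has_integral r * of_real (1/2)) {0..1/2}"
      by (rule has_integral_eq[OF _ h1]) (simp add: cst_def Dk_Dr)
    have h2: "((\<lambda>t. l * of_real (Dr K t)) has_integral l * of_real (1/2)) {1/2..1}"
      by (intro has_integral_mult_right has_integral_of_real Dr_half2)
    have h2': "((\<lambda>t. cst t * Dk K t) has_integral l * of_real (1/2)) {1/2..1}"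
      by (rule has_integral_spike_finite[OF _ _ h2, of "{1/2}"]) (auto simp: cst_def Dk_Dr)
    have "((\<lambda>t. cst t * Dk K t) has_integral (r * of_real (1/2) + l * of_real (1/2))) {0..1}"
      by (rule has_integral_combine[OF _ _ h1' h2']) auto
    moreover have "r * of_real (1/2) + l * of_real (1/2) = f y" using fy by (simp add: field_simps)
    ultimately show ?thesis by simp
  qed
  define \<psi> where "\<psi> t = (g t - cst t) * of_real (inverse (sin (pi * t)))" for t
  define X1 where "X1 t = \<psi> t * e ((1/2) * t)" for t
  define X2 where "X2 t = \<psi> t * e ((-1/2) * t)" for t
  have bmpsi: "bm \<psi>"
  proof -
    have mc: "cst measurable_on {0..1}"
    proof (rule lebesgue_measurable_imp_measurable_on)
      show "cst \<in> borel_measurable lebesgue" unfolding cst_def[abs_def]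
        by (intro measurable_completion) measurable
    qed simp
    have ms: "(\<lambda>t. complex_of_real (inverse (sin (pi * t)))) measurable_on {0..1}"
    proof (rule lebesgue_measurable_imp_measurable_on)
      show "(\<lambda>t. complex_of_real (inverse (sin (pi * t)))) \<in> borel_measurable lebesgue"
        by (intro measurable_completion) measurable
    qed simp
    have mg: "g measurable_on {0..1}" using bmg by (simp add: bm_def)
    have m: "\<psi> measurable_on {0..1}"
      unfolding \<psi>_def[abs_def]
      by (rule measurable_on_bilinear[OF bilinear_times measurable_on_diff[OF mg mc] ms])
    define Kb where "Kb = (abs C1 + 2 * B / \<delta>1) + (abs C2 + 2 * B / \<delta>2)"
    have K1: "0 \<le> abs C2 + 2 * B / \<delta>2" "0 \<le> abs C1 + 2 * B / \<delta>1" using B0 d1 d2 by auto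
    have bnd: "norm (\<psi> t) \<le> Kb" if t: "t \<in> {0..1}" for t
    proof -
      have sge: "0 \<le> sin (pi * t)" using t by (intro sin_ge_zero) auto
      have nrm: "norm (\<psi> t) = norm (g t - cst t) / sin (pi * t)"
        unfolding \<psi>_def using sge by (simp add: norm_mult divide_inverse norm_inverse)
      consider "t = 0 \<or> t = 1" | "0 < t \<and> t \<le> 1/2" | "1/2 < t \<and> t < 1" using t by force
      then show ?thesis
      proof cases
        case 1
        then have "\<psi> t = 0" by (auto simp: \<psi>_def)
        then show ?thesis using K1 by (simp add: Kb_def)
      next
        case 2
        have "norm (g t - r) / sin (pi * t) \<le> abs C1 + 2 * B / \<delta>1"
        proof (rule ratio_bound[OF _ _ _ _ d1])
          show "0 < t" using 2 by simp
          show "t \<le> sin (pi * t)" using 2 by (intro sin_pi_ge) auto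
          show "norm (g t - r) \<le> 2 * B"
            using norm_triangle_ineq4[of "g t" r] fbound[of "y + t"] rB unfolding g_def by linarith
          show "norm (g t - r) \<le> C1 * t" if "t < \<delta>1" using lip1 that 2 unfolding g_def by blast
        qed
        then show ?thesis using nrm 2 K1 by (simp add: cst_def Kb_def)
      next
        case 3
        define u where "u = 1 - t"
        have u: "0 < u" "u \<le> 1/2" using 3 by (auto simp: u_def)
        have gt: "g t = f (y - u)" unfolding g_def u_def using per[rule_format, of "y - (1 - t)"] by simp
        have st: "sin (pi * t) = sin (pi * u)"
        proof -
          have "pi * t = pi - pi * u" by (simp add: u_def algebra_simps)
          then show ?thesis by simp
        qed
        have "norm (f (y - u) - l) / sin (pi * u) \<le> abs C2 + 2 * B / \<delta>2"
        proof (rule ratio_bound[OF _ _ _ _ d2])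
          show "0 < u" using u by simp
          show "u \<le> sin (pi * u)" using u by (intro sin_pi_ge) auto
          show "norm (f (y - u) - l) \<le> 2 * B"
            using norm_triangle_ineq4[of "f (y - u)" l] fbound[of "y - u"] lB by linarith
          show "norm (f (y - u) - l) \<le> C2 * u" if "u < \<delta>2" using lip2 that u by blast
        qed
        then show ?thesis using nrm 3 K1 gt st by (simp add: cst_def Kb_def)
      qed
    qed
    then have "bounded (\<psi> ` {0..1})" unfolding bounded_iff by blast
    with m show ?thesis by (simp add: bm_def)
  qed
  have bmX1: "bm X1" unfolding X1_def by (intro bm_mult bmpsi bm_e)
  have bmX2: "bm X2" unfolding X2_def by (intro bm_mult bmpsi bm_e)
  define I1 where "I1 K = integral {0..1} (\<lambda>t. X1 t * e (of_int 1 * real K * t))" for K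
  define I2 where "I2 K = integral {0..1} (\<lambda>t. X2 t * e (of_int (-1) * real K * t))" for K
  have pw: "(X1 t * e (of_int 1 * real K * t) - X2 t * e (of_int (-1) * real K * t)) / (2 * \<i>) =
            g t * Dk K t - cst t * Dk K t" if "t \<in> {0..1} - {0,1}" for t K
  proof -
    have t: "0 < t" "t < 1" using that by auto
    have s: "sin (pi * t) \<noteq> 0" using t by (intro order.strict_implies_not_eq[symmetric] sin_gt_zero) auto
    define x where "x = (real K + 1/2) * t"
    have ex1: "e ((1/2) * t) * e (of_int 1 * real K * t) = e x"
      unfolding x_def by (simp add: e_add[symmetric] algebra_simps)
    have ex2: "e ((-1/2) * t) * e (of_int (-1) * real K * t) = e (- x)"
      unfolding x_def by (simp add: e_add[symmetric] algebra_simps)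
    have arg: "2 * pi * x = (2 * real K + 1) * pi * t" unfolding x_def by (simp add: algebra_simps)
    have sn: "e x - e (- x) = 2 * \<i> * of_real (Dr K t * sin (pi * t))"
      unfolding e_minus_e_minus arg Dr_sin ..
    have "(X1 t * e (of_int 1 * real K * t) - X2 t * e (of_int (-1) * real K * t)) / (2 * \<i>)
        = \<psi> t * (e ((1/2) * t) * e (of_int 1 * real K * t) - e ((-1/2) * t) * e (of_int (-1) * real K * t)) / (2 * \<i>)"
      unfolding X1_def X2_def by (simp add: algebra_simps)
    also have "\<dots> = \<psi> t * of_real (Dr K t * sin (pi * t))"
    proof -
      have "\<psi> t * (2 * \<i> * w) / (2 * \<i>) = \<psi> t * w" for w :: complex
        by (simp add: field_simps)
      then show ?thesis unfolding ex1 ex2 sn .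
    qed
    also have "\<dots> = (g t - cst t) * Dk K t"
      unfolding \<psi>_def Dk_Dr using s by (simp add: field_simps)
    finally show ?thesis by (simp add: algebra_simps)
  qed
  have eq: "SK K - f y = (I1 K - I2 K) / (2 * \<i>)" for K
  proof -
    have fin: "finite {0::real, 1}" by simp
    have hd: "((\<lambda>t. g t * Dk K t - cst t * Dk K t) has_integral SK K - f y) {0..1}"
      by (rule has_integral_diff[OF step2 step3])
    have "((\<lambda>t. (X1 t * e (of_int 1 * real K * t) - X2 t * e (of_int (-1) * real K * t)) / (2 * \<i>)) has_integral SK K - f y) {0..1}"
      by (rule has_integral_spike_finite[OF fin _ hd]) (use pw in auto)
    moreover have "((\<lambda>t. (X1 t * e (of_int 1 * real K * t) - X2 t * e (of_int (-1) * real K * t)) / (2 * \<i>)) has_integral (I1 K - I2 K) / (2 * \<i>)) {0..1}"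
      unfolding I1_def I2_def
      by (intro has_integral_divide has_integral_diff integrable_integral bm_integrable bm_mult bmX1 bmX2 bm_e)
    ultimately show ?thesis using has_integral_unique by blast
  qed
  have "(\<lambda>K. (I1 K - I2 K) / (2 * \<i>)) \<longlonglongrightarrow> (0 - 0) / (2 * \<i>)"
    unfolding I1_def I2_def by (intro tendsto_intros RL bmX1 bmX2) auto
  then have "(\<lambda>K. SK K - f y) \<longlonglongrightarrow> 0" using eq by simp
  then have "(\<lambda>K. SK K - f y + f y) \<longlonglongrightarrow> 0 + f y" by (intro tendsto_intros)
  then show ?thesis unfolding SK_def by simp
qed



lemma poly_mod_cong: "(a::int) mod m = b mod m \<Longrightarrow> poly p a mod m = poly p b mod m"
proof (induction p)
  case 0 then show ?case by simp
next
  case (pCons c p)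
  have "(a * poly p a) mod m = (b * poly p b) mod m"
    by (rule mod_mult_cong[OF pCons(3) pCons(2)[OF pCons(3)]])
  then have "(c + a * poly p a) mod m = (c + b * poly p b) mod m"
    by (rule mod_add_cong[OF refl])
  then show ?case by simp
qed

lemma sum_int_nat: "(\<Sum>v\<in>{0..<int q}. F v) = (\<Sum>v<q. F (int v))"
proof -
  have "{0..<int q} = int ` {..<q}"
  proof
    show "{0..<int q} \<subseteq> int ` {..<q}"
    proof
      fix x assume x: "x \<in> {0..<int q}"
      show "x \<in> int ` {..<q}" by (rule image_eqI[of _ _ "nat x"]) (use x in auto)
    qed
  qed auto
  then show ?thesis by (simp add: sum.reindex)
qed

lemma sum_e_div:
  assumes q: "q > 0"
  shows "(\<Sum>v\<in>{0..<int q}. e (of_int (v * m) / of_nat q)) = (if int q dvd m then of_nat q else 0)"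
proof -
  define z where "z = e (of_int m / of_nat q)"
  have "(\<Sum>v\<in>{0..<int q}. e (of_int (v * m) / of_nat q)) = (\<Sum>v<q. z ^ v)"
    unfolding sum_int_nat z_def e_nat_mult[symmetric] by (simp add: algebra_simps)
  also have "\<dots> = (if int q dvd m then of_nat q else 0)"
  proof (cases "int q dvd m")
    case True
    then obtain j where "m = int q * j" by blast
    then have "z = 1" using q unfolding z_def by simp
    then show ?thesis using True by simp
  next
    case False
    have "z \<noteq> 1"
    proof
      assume "z = 1"
      then have "(of_int m / of_nat q :: real) \<in> \<int>" unfolding z_def e_eq_1_iff .
      then obtain j where j: "of_int m / of_nat q = (of_int j :: real)" by (auto elim: Ints_cases)
      then have "of_int m = (of_int (j * int q) :: real)" using q by (simp add: field_simps)
      then have "m = j * int q" by linarith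
      then show False using False by simp
    qed
    moreover have "z ^ q = 1"
      unfolding z_def e_nat_mult[symmetric] using q by simp
    ultimately show ?thesis using False by (simp add: sum_gp_strict)
  qed
  finally show ?thesis .
qed

lemma e_poly_expand:
  assumes q: "q > 0"
  shows "e (of_int u / of_nat q * of_int (poly P k)) =
         (1 / of_nat q) * (\<Sum>v\<in>{0..<int q}. G P u v q * e (of_int k * (of_int v / of_nat q)))"
proof -
  have "(\<Sum>v\<in>{0..<int q}. G P u v q * e (of_int k * (of_int v / of_nat q)))
      = (\<Sum>v\<in>{0..<int q}. \<Sum>w\<in>{0..<int q}. e (of_int (u * poly P w) / of_nat q) * e (of_int (v * (k - w)) / of_nat q))"
    unfolding G_def sum_distrib_right
    by (intro sum.cong refl) (simp add: e_add[symmetric] add_divide_distrib[symmetric] algebra_simps)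
  also have "\<dots> = (\<Sum>w\<in>{0..<int q}. e (of_int (u * poly P w) / of_nat q) * (\<Sum>v\<in>{0..<int q}. e (of_int (v * (k - w)) / of_nat q)))"
    by (subst sum.swap) (simp add: sum_distrib_left)
  also have "\<dots> = (\<Sum>w\<in>{0..<int q}. if w = k mod int q then of_nat q * e (of_int u / of_nat q * of_int (poly P k)) else 0)"
  proof (intro sum.cong refl)
    fix w assume w: "w \<in> {0..<int q}"
    have dv: "int q dvd (k - w) \<longleftrightarrow> w = k mod int q"
    proof -
      have "int q dvd (k - w) \<longleftrightarrow> k mod int q = w mod int q" by (simp add: mod_eq_dvd_iff)
      also have "w mod int q = w" using w by simp
      finally show ?thesis by auto
    qed
    show "e (of_int (u * poly P w) / of_nat q) * (\<Sum>v\<in>{0..<int q}. e (of_int (v * (k - w)) / of_nat q)) =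
          (if w = k mod int q then of_nat q * e (of_int u / of_nat q * of_int (poly P k)) else 0)"
    proof (cases "w = k mod int q")
      case True
      have "poly P w mod int q = poly P k mod int q"
        by (rule poly_mod_cong) (simp add: True)
      then have "int q dvd (poly P w - poly P k)" by (simp add: mod_eq_dvd_iff)
      then obtain j where j: "poly P w = poly P k + int q * j" by (metis add.commute diff_add_cancel dvdE)
      have "(of_int (u * poly P w) / of_nat q :: real) = of_int u / of_nat q * of_int (poly P k) + of_int (u * j)"
        using q unfolding j by (simp add: field_simps)
      then have "e (of_int (u * poly P w) / of_nat q) = e (of_int u / of_nat q * of_int (poly P k) + of_int (u * j))"
        by (rule arg_cong[where f=e])
      also have "\<dots> = e (of_int u / of_nat q * of_int (poly P k))" by (rule e_periodic)
      finally have "e (of_int (u * poly P w) / of_nat q) = e (of_int u / of_nat q * of_int (poly P k))" .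
      then show ?thesis using True dv sum_e_div[OF q, of "k - w"] by (simp add: mult.commute)
    next
      case False
      then show ?thesis using dv sum_e_div[OF q, of "k - w"] by simp
    qed
  qed
  also have "\<dots> = of_nat q * e (of_int u / of_nat q * of_int (poly P k))"
    using q by (simp add: sum.delta')
  finally show ?thesis using q by simp
qed



lemma U_partial_eq:
  assumes q: "q > 0"
  shows "U_partial P f (of_int u / of_nat q) x K =
    (1 / of_nat q) * (\<Sum>v\<in>{0..<int q}. G P u v q *
       (\<Sum>k = - int K..int K. fourier_coeff f k * e (of_int k * (x + of_int v / of_nat q))))"
proof -
  have "U_partial P f (of_int u / of_nat q) x K =
      (\<Sum>k = - int K..int K. \<Sum>v\<in>{0..<int q}. (1 / of_nat q) * (G P u v q * (fourier_coeff f k * e (of_int k * (x + of_int v / of_nat q)))))"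
    unfolding U_partial_def
  proof (intro sum.cong refl)
    fix k
    have "e (of_int u / of_nat q * of_int (poly P k) + of_int k * x) =
          e (of_int u / of_nat q * of_int (poly P k)) * e (of_int k * x)" by (rule e_add)
    also have "\<dots> = (1 / of_nat q) * (\<Sum>v\<in>{0..<int q}. G P u v q * (e (of_int k * (of_int v / of_nat q)) * e (of_int k * x)))"
      unfolding e_poly_expand[OF q] by (simp add: sum_distrib_right mult.assoc)
    also have "\<dots> = (1 / of_nat q) * (\<Sum>v\<in>{0..<int q}. G P u v q * e (of_int k * (x + of_int v / of_nat q)))"
      by (simp add: e_add[symmetric] algebra_simps)
    finally show "fourier_coeff f k * e (of_int u / of_nat q * of_int (poly P k) + of_int k * x) =
      (\<Sum>v\<in>{0..<int q}. (1 / of_nat q) * (G P u v q * (fourier_coeff f k * e (of_int k * (x + of_int v / of_nat q)))))"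
      by (simp add: sum_distrib_left algebra_simps)
  qed
  also have "\<dots> = (1 / of_nat q) * (\<Sum>v\<in>{0..<int q}. G P u v q *
       (\<Sum>k = - int K..int K. fourier_coeff f k * e (of_int k * (x + of_int v / of_nat q))))"
    by (subst sum.swap) (simp add: sum_distrib_left)
  finally show ?thesis .
qed

lemma pc_shift:
  assumes "piecewise_constant g" shows "piecewise_constant (\<lambda>x. g (x + c))"
  unfolding piecewise_constant_def
proof (intro allI)
  fix a b :: real
  have "\<exists>S. finite S \<and> (\<forall>x y. a + c \<le> x \<and> x \<le> y \<and> y \<le> b + c \<and> {x..y} \<inter> S = {} \<longrightarrow> g x = g y)"
    using assms unfolding piecewise_constant_def by blast
  then obtain S where S: "finite S" "\<And>x y. a + c \<le> x \<and> x \<le> y \<and> y \<le> b + c \<and> {x..y} \<inter> S = {} \<Longrightarrow> g x = g y"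
    by blast
  have fin: "finite ((\<lambda>s. s - c) ` S)" using S(1) by simp
  have main: "g (x + c) = g (y + c)" if xy: "a \<le> x \<and> x \<le> y \<and> y \<le> b \<and> {x..y} \<inter> (\<lambda>s. s - c) ` S = {}" for x y
  proof -
    have "{x + c..y + c} \<inter> S = {}"
    proof (rule ccontr)
      assume "{x + c..y + c} \<inter> S \<noteq> {}"
      then obtain s where s: "s \<in> S" "x + c \<le> s" "s \<le> y + c" by fastforce
      then have "s - c \<in> {x..y}" by simp
      moreover have "s - c \<in> (\<lambda>s. s - c) ` S" using s(1) by (rule imageI)
      ultimately show False using xy by (simp add: disjoint_iff)
    qed
    then show ?thesis by (intro S(2)) (use xy in simp)
  qed
  show "\<exists>S. finite S \<and> (\<forall>x y. a \<le> x \<and> x \<le> y \<and> y \<le> b \<and> {x..y} \<inter> S = {} \<longrightarrow> g (x + c) = g (y + c))"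
    using fin main by blast
qed
lemma pc_add:
  assumes "piecewise_constant g" "piecewise_constant h" shows "piecewise_constant (\<lambda>x. g x + h x)"
  unfolding piecewise_constant_def
proof (intro allI)
  fix a b :: real
  have "\<exists>S. finite S \<and> (\<forall>x y. a \<le> x \<and> x \<le> y \<and> y \<le> b \<and> {x..y} \<inter> S = {} \<longrightarrow> g x = g y)"
    using assms(1) unfolding piecewise_constant_def by blast
  then obtain S where S: "finite S" "\<And>x y. a \<le> x \<and> x \<le> y \<and> y \<le> b \<and> {x..y} \<inter> S = {} \<Longrightarrow> g x = g y"
    by blast
  have "\<exists>T. finite T \<and> (\<forall>x y. a \<le> x \<and> x \<le> y \<and> y \<le> b \<and> {x..y} \<inter> T = {} \<longrightarrow> h x = h y)"
    using assms(2) unfolding piecewise_constant_def by blast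
  then obtain T where T: "finite T" "\<And>x y. a \<le> x \<and> x \<le> y \<and> y \<le> b \<and> {x..y} \<inter> T = {} \<Longrightarrow> h x = h y"
    by blast
  show "\<exists>S. finite S \<and> (\<forall>x y. a \<le> x \<and> x \<le> y \<and> y \<le> b \<and> {x..y} \<inter> S = {} \<longrightarrow> g x + h x = g y + h y)"
  proof (intro exI conjI allI impI)
    show "finite (S \<union> T)" using S T by simp
    fix x y assume xy: "a \<le> x \<and> x \<le> y \<and> y \<le> b \<and> {x..y} \<inter> (S \<union> T) = {}"
    have "g x = g y" by (intro S(2)) (use xy in \<open>simp add: Int_Un_distrib\<close>)
    moreover have "h x = h y" by (intro T(2)) (use xy in \<open>simp add: Int_Un_distrib\<close>)
    ultimately show "g x + h x = g y + h y" by simp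
  qed
qed

lemma pc_cmult:
  assumes "piecewise_constant g" shows "piecewise_constant (\<lambda>x. c * g x)"
  unfolding piecewise_constant_def
proof (intro allI)
  fix a b :: real
  have "\<exists>S. finite S \<and> (\<forall>x y. a \<le> x \<and> x \<le> y \<and> y \<le> b \<and> {x..y} \<inter> S = {} \<longrightarrow> g x = g y)"
    using assms unfolding piecewise_constant_def by blast
  then obtain S where S: "finite S" "\<And>x y. a \<le> x \<and> x \<le> y \<and> y \<le> b \<and> {x..y} \<inter> S = {} \<Longrightarrow> g x = g y"
    by blast
  show "\<exists>S. finite S \<and> (\<forall>x y. a \<le> x \<and> x \<le> y \<and> y \<le> b \<and> {x..y} \<inter> S = {} \<longrightarrow> c * g x = c * g y)"
    using S by (intro exI[of _ S]) simp
qed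

lemma pc_zero: "piecewise_constant (\<lambda>x. 0)"
  unfolding piecewise_constant_def by auto

lemma pc_sum:
  assumes "\<And>i. i \<in> A \<Longrightarrow> piecewise_constant (g i)" shows "piecewise_constant (\<lambda>x. \<Sum>i\<in>A. g i x)"
  using assms
proof (induction A rule: infinite_finite_induct)
  case (infinite A) then show ?case by (simp add: pc_zero)
next
  case empty then show ?case by (simp add: pc_zero)
next
  case (insert a A)
  then show ?case by (simp add: pc_add)
qed



theorem theorem1p4:
  fixes P :: "int poly" and f :: "real \<Rightarrow> complex"
  assumes "classD f"
  shows "(\<forall>(u::int) (q::nat) (x::real). q > 0 \<and> coprime u (int q) \<longrightarrow>
            (U_partial P f (of_int u / of_nat q) x \<longlonglongrightarrow>
               (1 / of_nat q) * (\<Sum>v\<in>{0..<int q}. G P u v q * f (x + of_int v / of_nat q))))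
         \<and> (piecewise_constant (U P f 0) \<longrightarrow> (\<forall>t\<in>\<rat>. piecewise_constant (U P f t)))"
proof -
  have lim: "U_partial P f (of_int u / of_nat q) x \<longlonglongrightarrow>
               (1 / of_nat q) * (\<Sum>v\<in>{0..<int q}. G P u v q * f (x + of_int v / of_nat q))"
    if q: "q > 0" for u q x
  proof -
    have "(\<lambda>K. (1 / of_nat q) * (\<Sum>v\<in>{0..<int q}. G P u v q *
       (\<Sum>k = - int K..int K. fourier_coeff f k * e (of_int k * (x + of_int v / of_nat q)))))
       \<longlonglongrightarrow> (1 / of_nat q) * (\<Sum>v\<in>{0..<int q}. G P u v q * f (x + of_int v / of_nat q))"
      by (intro tendsto_mult tendsto_const tendsto_sum dirichlet[OF assms])
    then show ?thesis unfolding U_partial_eq[OF q] .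
  qed
  have part1: "\<forall>(u::int) (q::nat) (x::real). q > 0 \<and> coprime u (int q) \<longrightarrow>
            (U_partial P f (of_int u / of_nat q) x \<longlonglongrightarrow>
               (1 / of_nat q) * (\<Sum>v\<in>{0..<int q}. G P u v q * f (x + of_int v / of_nat q)))"
    using lim by blast
  have Ueq: "U P f (of_int u / of_nat q) = (\<lambda>x. (1 / of_nat q) * (\<Sum>v\<in>{0..<int q}. G P u v q * f (x + of_int v / of_nat q)))"
    if q: "q > 0" for u q
  proof
    fix x
    show "U P f (of_int u / of_nat q) x = (1 / of_nat q) * (\<Sum>v\<in>{0..<int q}. G P u v q * f (x + of_int v / of_nat q))"
      unfolding U_def by (rule limI[OF lim[OF q]])
  qed
  have U0: "U P f 0 = f"
  proof -
    have "U P f (of_int 0 / of_nat 1) = (\<lambda>x. (1 / of_nat 1) * (\<Sum>v\<in>{0..<int 1}. G P 0 v 1 * f (x + of_int v / of_nat 1)))"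
      by (rule Ueq) simp
    moreover have "G P 0 0 1 = 1" by (simp add: G_def)
    moreover have "{0..<(1::int)} = {0}" by auto
    ultimately show ?thesis by simp
  qed
  have part2: "piecewise_constant (U P f t)" if pc: "piecewise_constant (U P f 0)" and t: "t \<in> \<rat>" for t
  proof -
    have pcf: "piecewise_constant f" using pc U0 by simp
    obtain a b where b: "0 < b" and ab: "t = of_int a / of_int b" using t by (rule Rats_cases') blast
    define q where "q = nat b"
    have q: "q > 0" and bq: "b = int q" using b by (auto simp: q_def)
    have "t = of_int a / of_nat q" using ab bq by simp
    then have "U P f t = (\<lambda>x. (1 / of_nat q) * (\<Sum>v\<in>{0..<int q}. G P a v q * f (x + of_int v / of_nat q)))"
      using Ueq[OF q] by simp
    moreover have "piecewise_constant (\<lambda>x. (1 / of_nat q) * (\<Sum>v\<in>{0..<int q}. G P a v q * f (x + of_int v / of_nat q)))"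
      by (intro pc_cmult pc_sum pc_shift pcf)
    ultimately show ?thesis by simp
  qed
  show ?thesis using part1 part2 by blast
qed


end
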